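(* For every $v\in\mathbb R$ we have $|\partial^+\Lambda(v)|\le1$ and $|\partial^-\Lambda(v)|\le1$, and for $v>0$ also $\partial^+\Lambda(v)\ge0$ and $\partial^-\Lambda(v)\ge0$.
   Context: Model: Let $G$ be a probability measure on $[0,\infty)$. In $\mathbb Z^2$, every vertical edge receives weight $1$ and every horizontal edge receives an independent random weight with law $G$. Passage time $T(p)$ of a nearest-neighbour path is the sum of the weights of its edges; $T(u,w)=\inf_pT(p)$ over paths from $u$ to $w$. For $v\ge0$, $\Lambda(v)=\lim_n\frac1nT((0,0),(n,\lceil vn\rceil))$ exists a.s., is deterministic and convex; it is extended to $\mathbb R$ by $\Lambda(-v)=\Lambda(v)$, yielding a convex function on $\mathbb R$. One-sided derivatives: $\partial^+\Lambda(v)=\lim_{w\searrow v}\frac{\Lambda(w)-\Lambda(v)}{w-v}$, $\partial^-\Lambda(v)=\lim_{w\nearrow v}\frac{\Lambda(v)-\Lambda(w)}{v-w}$. *)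

theory Defs
  imports "HOL-Probability.Probability"
begin

text \<open>The horizontal edge between (x,y) and
(x+1,y) is indexed by its left endpoint (x,y); an environment is a function
omega :: int \<times> int \<Rightarrow> real giving the weights of the horizontal edges.\<close>

definition nn :: "int \<times> int \<Rightarrow> int \<times> int \<Rightarrow> bool" where
  "nn a b \<longleftrightarrow> \<bar>fst a - fst b\<bar> + \<bar>snd a - snd b\<bar> = 1"

definition edge_wt :: "(int \<times> int \<Rightarrow> real) \<Rightarrow> int \<times> int \<Rightarrow> int \<times> int \<Rightarrow> real" where
  "edge_wt \<omega> a b = (if fst a = fst b then 1 else \<omega> (min (fst a) (fst b), snd a))"

definition nn_path :: "(int \<times> int) list \<Rightarrow> bool" where
  "nn_path p \<longleftrightarrow> p \<noteq> [] \<and> (\<forall>i. Suc i < length p \<longrightarrow> nn (p ! i) (p ! Suc i))"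

definition path_time :: "(int \<times> int \<Rightarrow> real) \<Rightarrow> (int \<times> int) list \<Rightarrow> real" where
  "path_time \<omega> p = (\<Sum>i<length p - 1. edge_wt \<omega> (p ! i) (p ! Suc i))"

definition passage_time :: "(int \<times> int \<Rightarrow> real) \<Rightarrow> int \<times> int \<Rightarrow> int \<times> int \<Rightarrow> real" where
  "passage_time \<omega> u w =
     (INF p \<in> {p. nn_path p \<and> hd p = u \<and> last p = w}. path_time \<omega> p)"

definition right_deriv :: "(real \<Rightarrow> real) \<Rightarrow> real \<Rightarrow> real" where
  "right_deriv f v = Lim (at_right v) (\<lambda>w. (f w - f v) / (w - v))"

definition left_deriv :: "(real \<Rightarrow> real) \<Rightarrow> real \<Rightarrow> real" where
  "left_deriv f v = Lim (at_left v) (\<lambda>w. (f v - f w) / (v - w))"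

end

theory Submission
  imports Defs
begin


lemma ae_ex_big:
  assumes P: "prob_space P" and S[measurable]: "\<And>N. {\<omega>\<in>space P. Q N \<omega>} \<in> sets P"
    and mono: "\<And>N M \<omega>. N \<le> M \<Longrightarrow> Q N \<omega> \<Longrightarrow> Q M \<omega>"
    and ae: "AE \<omega> in P. \<exists>N. Q N \<omega>"
  shows "\<forall>\<^sub>F N in sequentially. measure P {\<omega>\<in>space P. Q N \<omega>} > 1/2"
proof -
  interpret prob_space P by fact
  let ?A = "\<lambda>N. {\<omega>\<in>space P. Q N \<omega>}"
  have inc: "incseq ?A" using mono by (auto simp: incseq_def)
  have U: "(\<Union>N. ?A N) = {\<omega>\<in>space P. \<exists>N. Q N \<omega>}" by auto
  have Us: "(\<Union>N. ?A N) \<in> sets P" using S by blast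
  have "prob (\<Union>N. ?A N) = 1"
    using AE_in_set_eq_1[OF Us] ae unfolding U by (auto elim: AE_mp)
  then have "(\<lambda>N. prob (?A N)) \<longlonglongrightarrow> 1"
  proof -
    have "range ?A \<subseteq> sets P" using S by auto
    from finite_Lim_measure_incseq[OF this inc] \<open>prob (\<Union>N. ?A N) = 1\<close> show ?thesis by simp
  qed
  then show ?thesis by (rule order_tendstoD) simp
qed

lemma prob_key:
  fixes X Y Z W :: "nat \<Rightarrow> 'a \<Rightarrow> real"
  assumes P: "prob_space P"
  and [measurable]: "\<And>n. X n \<in> borel_measurable P" "\<And>n. Y n \<in> borel_measurable P"
      "\<And>n. Z n \<in> borel_measurable P" "\<And>n. W n \<in> borel_measurable P"
  and le: "AE \<omega> in P. \<forall>n. W n \<omega> \<le> X n \<omega> + Y n \<omega>"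
  and dist: "\<And>n t. measure P {\<omega>\<in>space P. Y n \<omega> > t} = measure P {\<omega>\<in>space P. Z n \<omega> > t}"
  and Xl: "AE \<omega> in P. (\<lambda>n. X n \<omega>) \<longlonglongrightarrow> a"
  and Zl: "AE \<omega> in P. (\<lambda>n. Z n \<omega>) \<longlonglongrightarrow> b"
  and Wl: "AE \<omega> in P. (\<lambda>n. W n \<omega>) \<longlonglongrightarrow> c"
  shows "c \<le> a + b"
proof (rule ccontr)
  interpret prob_space P by fact
  assume "\<not> c \<le> a + b"
  define e where "e = (c - a - b) / 3"
  have e: "e > 0" using \<open>\<not> c \<le> a + b\<close> by (simp add: e_def)
  have 1: "\<forall>\<^sub>F N in sequentially. prob {\<omega>\<in>space P. \<forall>n\<ge>N. b + e < Y n \<omega>} > 1/2"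
  proof (rule ae_ex_big[OF P])
    show "{\<omega> \<in> space P. \<forall>n\<ge>N. b + e < Y n \<omega>} \<in> sets P" for N by measurable
    show "AE \<omega> in P. \<exists>N. \<forall>n\<ge>N. b + e < Y n \<omega>"
      using Xl Wl le
    proof eventually_elim
      case (elim \<omega>)
      have "\<forall>\<^sub>F n in sequentially. X n \<omega> < a + e" using elim(1) e by (intro order_tendstoD) auto
      moreover have "\<forall>\<^sub>F n in sequentially. W n \<omega> > c - e" using elim(2) e by (intro order_tendstoD) auto
      ultimately have "\<forall>\<^sub>F n in sequentially. b + e < Y n \<omega>"
      proof eventually_elim
        case (elim n) then show ?case using \<open>\<forall>n. W n \<omega> \<le> X n \<omega> + Y n \<omega>\<close>[rule_format, of n]
          by (simp add: e_def field_simps)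
      qed
      then show ?case by (simp add: eventually_sequentially)
    qed
  qed auto
  have 2: "\<forall>\<^sub>F N in sequentially. prob {\<omega>\<in>space P. \<forall>n\<ge>N. Z n \<omega> < b + e} > 1/2"
  proof (rule ae_ex_big[OF P])
    show "{\<omega> \<in> space P. \<forall>n\<ge>N. Z n \<omega> < b + e} \<in> sets P" for N by measurable
    show "AE \<omega> in P. \<exists>N. \<forall>n\<ge>N. Z n \<omega> < b + e"
      using Zl
    proof eventually_elim
      case (elim \<omega>)
      have "\<forall>\<^sub>F n in sequentially. Z n \<omega> < b + e" using elim(1) e by (intro order_tendstoD) auto
      then show ?case by (simp add: eventually_sequentially)
    qed
  qed auto
  from eventually_conj[OF 1 2] obtain N where
    N1: "prob {\<omega>\<in>space P. \<forall>n\<ge>N. b + e < Y n \<omega>} > 1/2" and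
    N2: "prob {\<omega>\<in>space P. \<forall>n\<ge>N. Z n \<omega> < b + e} > 1/2"
    by (auto simp: eventually_sequentially)
  have "prob {\<omega>\<in>space P. \<forall>n\<ge>N. b + e < Y n \<omega>} \<le> prob {\<omega>\<in>space P. Y N \<omega> > b + e}"
    by (rule finite_measure_mono) auto
  also have "\<dots> = prob {\<omega>\<in>space P. Z N \<omega> > b + e}" by (rule dist)
  also have "\<dots> \<le> prob (space P - {\<omega>\<in>space P. \<forall>n\<ge>N. Z n \<omega> < b + e})"
    by (rule finite_measure_mono) auto
  also have "\<dots> = 1 - prob {\<omega>\<in>space P. \<forall>n\<ge>N. Z n \<omega> < b + e}"
    by (rule prob_compl) measurable
  finally show False using N1 N2 by simp
qed



lemma nn_path_Cons: "nn_path (a # p) \<longleftrightarrow> (p = [] \<or> (nn a (hd p) \<and> nn_path p))"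
  unfolding nn_path_def
  apply (cases p)
   apply simp
  apply (auto simp: nth_Cons split: nat.splits)
  done

lemma path_time_single[simp]: "path_time \<omega> [a] = 0"
  by (simp add: path_time_def)

lemma path_time_Cons: "p \<noteq> [] \<Longrightarrow> path_time \<omega> (a # p) = edge_wt \<omega> a (hd p) + path_time \<omega> p"
proof -
  assume "p \<noteq> []"
  then obtain m where m: "length p = Suc m" by (cases p) auto
  have "path_time \<omega> (a # p) = (\<Sum>i<Suc m. edge_wt \<omega> ((a#p) ! i) ((a#p) ! Suc i))"
    by (simp add: path_time_def m)
  also have "\<dots> = edge_wt \<omega> a (p ! 0) + (\<Sum>i<m. edge_wt \<omega> (p ! i) (p ! Suc i))"
    by (subst sum.lessThan_Suc_shift) simp
  also have "\<dots> = edge_wt \<omega> a (hd p) + path_time \<omega> p"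
    using \<open>p \<noteq> []\<close> by (simp add: path_time_def m hd_conv_nth)
  finally show ?thesis .
qed

lemma concat_path:
  assumes "nn_path p" "nn_path q" "last p = hd q"
  shows "nn_path (p @ tl q) \<and> hd (p @ tl q) = hd p \<and> last (p @ tl q) = last q \<and>
         path_time \<omega> (p @ tl q) = path_time \<omega> p + path_time \<omega> q"
  using assms
proof (induction p)
  case Nil then show ?case by (simp add: nn_path_def)
next
  case (Cons a p)
  show ?case
  proof (cases "p = []")
    case True
    then have "a = hd q" using Cons by simp
    then have "a # tl q = q" using Cons.prems(2) by (cases q) (auto simp: nn_path_def)
    then show ?thesis using True Cons.prems \<open>a = hd q\<close> by (auto simp: nn_path_def)
  next
    case False
    have np: "nn_path p" and nap: "nn a (hd p)" using Cons.prems(1) False by (auto simp: nn_path_Cons)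
    have IH: "nn_path (p @ tl q) \<and> hd (p @ tl q) = hd p \<and> last (p @ tl q) = last q \<and>
         path_time \<omega> (p @ tl q) = path_time \<omega> p + path_time \<omega> q"
      using Cons.IH[OF np Cons.prems(2)] Cons.prems(3) False by simp
    have ne: "p @ tl q \<noteq> []" using False by simp
    show ?thesis using IH ne False nap
      by (auto simp: nn_path_Cons path_time_Cons)
  qed
qed

definition T where "T \<omega> u w = passage_time \<omega> u w"

definition paths where "paths u w = {p. nn_path p \<and> hd p = u \<and> last p = w}"

lemma T_def': "T \<omega> u w = (INF p \<in> paths u w. path_time \<omega> p)"
  by (simp add: T_def passage_time_def paths_def)

lemma edge_wt_nonneg: "(\<forall>e. \<omega> e \<ge> 0) \<Longrightarrow> edge_wt \<omega> a b \<ge> 0"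
  by (simp add: edge_wt_def)

lemma path_time_nonneg: "(\<forall>e. \<omega> e \<ge> 0) \<Longrightarrow> path_time \<omega> p \<ge> 0"
  unfolding path_time_def by (intro sum_nonneg edge_wt_nonneg)

lemma vert_path: "\<exists>p\<in>paths (x, y) (x, y + int k). path_time \<omega> p = real k"
proof (induction k arbitrary: y)
  case 0 then show ?case by (intro bexI[of _ "[(x,y)]"]) (auto simp: paths_def nn_path_def)
next
  case (Suc k)
  from Suc.IH[of "y+1"] obtain p where p: "p \<in> paths (x, y+1) (x, y + 1 + int k)" "path_time \<omega> p = real k" by auto
  have ne: "p \<noteq> []" using p by (auto simp: paths_def nn_path_def)
  have "(x,y) # p \<in> paths (x, y) (x, y + int (Suc k))"
    using p ne by (auto simp: paths_def nn_path_Cons nn_def)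
  moreover have "path_time \<omega> ((x,y) # p) = real (Suc k)"
    using p ne by (simp add: path_time_Cons edge_wt_def paths_def)
  ultimately show ?case by blast
qed

lemma vert_path_down: "\<exists>p\<in>paths (x, y) (x, y - int k). path_time \<omega> p = real k"
proof (induction k arbitrary: y)
  case 0 then show ?case by (intro bexI[of _ "[(x,y)]"]) (auto simp: paths_def nn_path_def)
next
  case (Suc k)
  from Suc.IH[of "y-1"] obtain p where p: "p \<in> paths (x, y-1) (x, y - 1 - int k)" "path_time \<omega> p = real k" by auto
  have ne: "p \<noteq> []" using p by (auto simp: paths_def nn_path_def)
  have "(x,y) # p \<in> paths (x, y) (x, y - int (Suc k))"
    using p ne by (auto simp: paths_def nn_path_Cons nn_def)
  moreover have "path_time \<omega> ((x,y) # p) = real (Suc k)"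
    using p ne by (simp add: path_time_Cons edge_wt_def paths_def)
  ultimately show ?case by blast
qed

lemma vert_path': "\<exists>p\<in>paths (x, y) (x, y'). path_time \<omega> p = \<bar>real_of_int (y' - y)\<bar>"
proof (cases "y \<le> y'")
  case True
  from vert_path[of x y "nat (y' - y)" \<omega>] True show ?thesis by auto
next
  case False
  from vert_path_down[of x y "nat (y - y')" \<omega>] False show ?thesis by auto
qed

lemma horiz_path_r: "\<exists>p. p\<in>paths (x, y) (x + int k, y)"
proof (induction k arbitrary: x)
  case 0 then show ?case by (intro exI[of _ "[(x,y)]"]) (auto simp: paths_def nn_path_def)
next
  case (Suc k)
  from Suc.IH[of "x+1"] obtain p where p: "p \<in> paths (x+1, y) (x + 1 + int k, y)" by auto
  have ne: "p \<noteq> []" using p by (auto simp: paths_def nn_path_def)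
  have "(x,y) # p \<in> paths (x, y) (x + int (Suc k), y)"
    using p ne by (auto simp: paths_def nn_path_Cons nn_def)
  then show ?case by blast
qed

lemma horiz_path_l: "\<exists>p. p\<in>paths (x, y) (x - int k, y)"
proof (induction k arbitrary: x)
  case 0 then show ?case by (intro exI[of _ "[(x,y)]"]) (auto simp: paths_def nn_path_def)
next
  case (Suc k)
  from Suc.IH[of "x-1"] obtain p where p: "p \<in> paths (x-1, y) (x - 1 - int k, y)" by auto
  have ne: "p \<noteq> []" using p by (auto simp: paths_def nn_path_def)
  have "(x,y) # p \<in> paths (x, y) (x - int (Suc k), y)"
    using p ne by (auto simp: paths_def nn_path_Cons nn_def)
  then show ?case by blast
qed

lemma paths_concat: "p \<in> paths u w \<Longrightarrow> q \<in> paths w z \<Longrightarrow>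
   p @ tl q \<in> paths u z \<and> path_time \<omega> (p @ tl q) = path_time \<omega> p + path_time \<omega> q"
  using concat_path[of p q \<omega>] by (auto simp: paths_def)

lemma horiz_path: "\<exists>p. p\<in>paths (x, y) (x', y)"
proof (cases "x \<le> x'")
  case True
  from horiz_path_r[of x y "nat (x' - x)"] True show ?thesis by auto
next
  case False
  from horiz_path_l[of x y "nat (x - x')"] False show ?thesis by auto
qed

lemma paths_nonempty: "paths u w \<noteq> {}"
proof -
  obtain x y x' y' where u: "u = (x,y)" and w: "w = (x',y')" by (cases u, cases w) auto
  obtain p where p: "p \<in> paths (x,y) (x',y)" using horiz_path by blast
  obtain q where q: "q \<in> paths (x',y) (x',y')" using vert_path'[of x' y y' undefined] by blast
  show ?thesis using paths_concat[OF p q] u w by blast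
qed

lemma bdd_paths: "(\<forall>e. \<omega> e \<ge> 0) \<Longrightarrow> bdd_below ((\<lambda>p. path_time \<omega> p) ` A)"
  by (rule bdd_belowI[of _ 0]) (auto intro: path_time_nonneg)

lemma T_nonneg: "(\<forall>e. \<omega> e \<ge> 0) \<Longrightarrow> T \<omega> u w \<ge> 0"
  unfolding T_def' using paths_nonempty by (intro cINF_greatest) (auto intro: path_time_nonneg)

lemma T_le_path: "(\<forall>e. \<omega> e \<ge> 0) \<Longrightarrow> p \<in> paths u w \<Longrightarrow> T \<omega> u w \<le> path_time \<omega> p"
  unfolding T_def' by (rule cINF_lower[OF bdd_paths])

lemma T_triangle:
  assumes nn: "\<forall>e. \<omega> e \<ge> 0"
  shows "T \<omega> u z \<le> T \<omega> u w + T \<omega> w z"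
proof -
  have "T \<omega> u z - T \<omega> w z \<le> path_time \<omega> p" if p: "p \<in> paths u w" for p
  proof -
    have "T \<omega> u z - path_time \<omega> p \<le> path_time \<omega> q" if q: "q \<in> paths w z" for q
      using paths_concat[OF p q, of \<omega>] T_le_path[OF nn, of "p @ tl q" u z] by auto
    then have "T \<omega> u z - path_time \<omega> p \<le> T \<omega> w z"
      unfolding T_def' using paths_nonempty by (intro cINF_greatest) auto
    then show ?thesis by simp
  qed
  then have "T \<omega> u z - T \<omega> w z \<le> T \<omega> u w"
    unfolding T_def'[of \<omega> u w] using paths_nonempty by (intro cINF_greatest) auto
  then show ?thesis by simp
qed

lemma T_vert:
  assumes nn: "\<forall>e. \<omega> e \<ge> 0"
  shows "T \<omega> u (x, y') \<le> T \<omega> u (x, y) + \<bar>real_of_int (y' - y)\<bar>"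
proof -
  obtain q where q: "q \<in> paths (x, y) (x, y')" "path_time \<omega> q = \<bar>real_of_int (y' - y)\<bar>"
    using vert_path' by blast
  have "T \<omega> (x,y) (x,y') \<le> \<bar>real_of_int (y' - y)\<bar>" using T_le_path[OF nn q(1)] q(2) by simp
  then show ?thesis using T_triangle[OF nn, of u "(x,y')" "(x,y)"] by simp
qed

lemma T_transform:
  assumes inv1: "\<And>a. \<phi> (\<psi> a) = a" and inv2: "\<And>a. \<psi> (\<phi> a) = a"
    and nn1: "\<And>a b. nn a b \<Longrightarrow> nn (\<phi> a) (\<phi> b)" and nn2: "\<And>a b. nn a b \<Longrightarrow> nn (\<psi> a) (\<psi> b)"
    and ew: "\<And>a b. edge_wt \<omega>' a b = edge_wt \<omega> (\<phi> a) (\<phi> b)"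
  shows "T \<omega>' u w = T \<omega> (\<phi> u) (\<phi> w)"
proof -
  have pt: "path_time \<omega>' p = path_time \<omega> (map \<phi> p)" for p
    unfolding path_time_def by (intro sum.cong) (auto simp: ew)
  have im: "map \<phi> ` paths u w = paths (\<phi> u) (\<phi> w)"
  proof
    show "map \<phi> ` paths u w \<subseteq> paths (\<phi> u) (\<phi> w)"
      by (auto simp: paths_def nn_path_def hd_map last_map nn1)
    show "paths (\<phi> u) (\<phi> w) \<subseteq> map \<phi> ` paths u w"
    proof
      fix q assume q: "q \<in> paths (\<phi> u) (\<phi> w)"
      have "q = map \<phi> (map \<psi> q)" by (simp add: inv1 map_idI)
      moreover have "map \<psi> q \<in> paths u w"
        using q by (auto simp: paths_def nn_path_def hd_map last_map nn2 inv2)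
      ultimately show "q \<in> map \<phi> ` paths u w" by blast
    qed
  qed
  have "T \<omega>' u w = (INF p \<in> paths u w. path_time \<omega> (map \<phi> p))" by (simp add: T_def' pt)
  also have "\<dots> = (INF q \<in> map \<phi> ` paths u w. path_time \<omega> q)" by (simp add: image_image)
  also have "\<dots> = T \<omega> (\<phi> u) (\<phi> w)" by (simp add: im T_def')
  finally show ?thesis .
qed

definition trv :: "int \<Rightarrow> int \<Rightarrow> int \<Rightarrow> int \<times> int \<Rightarrow> int \<times> int" where
  "trv d1 d2 s a = (fst a + d1, s * snd a + d2)"

lemma T_trv:
  assumes s: "s = 1 \<or> s = -1"
  shows "T (\<lambda>a. \<omega> (trv d1 d2 s a)) u w = T \<omega> (trv d1 d2 s u) (trv d1 d2 s w)"
proof (rule T_transform[where \<psi> = "trv (-d1) (- s * d2) s"])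
  have ss: "s * s = 1" using s by auto
  have ss2: "s * (s * x) = x" for x using ss by (metis mult.assoc mult_1)
  show "trv d1 d2 s (trv (- d1) (- s * d2) s a) = a" for a
    using s by (cases a) (auto simp: trv_def)
  show "trv (- d1) (- s * d2) s (trv d1 d2 s a) = a" for a
    using s by (cases a) (auto simp: trv_def)
  have as: "\<bar>s * x\<bar> = \<bar>x\<bar>" for x using s by auto
  show "nn a b \<Longrightarrow> nn (trv d1 d2 s a) (trv d1 d2 s b)" for a b
    using as[of "snd a - snd b"] by (simp add: nn_def trv_def algebra_simps)
  show "nn a b \<Longrightarrow> nn (trv (- d1) (- s * d2) s a) (trv (- d1) (- s * d2) s b)" for a b
    using as[of "snd a - snd b"] by (simp add: nn_def trv_def algebra_simps)
  show "edge_wt (\<lambda>a. \<omega> (trv d1 d2 s a)) a b = edge_wt \<omega> (trv d1 d2 s a) (trv d1 d2 s b)" for a b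
    by (simp add: edge_wt_def trv_def min_add_distrib_left min_add_distrib_right)
qed



locale fpp =
  fixes G :: "real measure" and \<Lambda> :: "real \<Rightarrow> real"
  assumes G: "prob_space G" and sG: "sets G = sets borel" and G0: "measure G {0..} = 1"
    and lim: "\<And>v. v \<ge> 0 \<Longrightarrow>
           AE \<omega> in PiM UNIV (\<lambda>_::int \<times> int. G).
             (\<lambda>n. passage_time \<omega> (0, 0) (int n, \<lceil>v * real n\<rceil>) / real n) \<longlonglongrightarrow> \<Lambda> v"
    and sym: "\<And>v. \<Lambda> (- v) = \<Lambda> v"
begin

abbreviation "P \<equiv> PiM UNIV (\<lambda>_::int \<times> int. G)"

lemma P: "prob_space P" by (rule prob_space_PiM) (simp add: G)

lemma spaceG: "space G = UNIV" using sets_eq_imp_space_eq[OF sG] by simp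
lemma spaceP: "space P = UNIV" by (simp add: space_PiM spaceG)

lemma AE_nonneg: "AE \<omega> in P. \<forall>e. \<omega> e \<ge> 0"
proof -
  interpret product_prob_space "\<lambda>_::int\<times>int. G" UNIV
    by (simp add: product_prob_space_def product_prob_space_axioms_def product_sigma_finite_def G
        prob_space_imp_sigma_finite)
  have "(AE x in G. x \<in> {0..}) = (measure G {0..} = 1)" by (rule prob_space.AE_in_set_eq_1[OF G]) (simp add: sG)
  with G0 have "AE x in G. x \<in> {0..}" by simp
  then have "AE \<omega> in P. \<omega> e \<ge> 0" for e by (intro AE_component) auto
  then show ?thesis by (subst AE_all_countable) auto
qed

lemma meas_comp: "(\<lambda>\<omega>. \<omega> i) \<in> borel_measurable P"
proof -
  have "(\<lambda>\<omega>. \<omega> i) \<in> measurable P G" by (rule measurable_component_singleton) simp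
  then show ?thesis using measurable_cong_sets[OF refl sG, of P] by simp
qed

lemma meas_edge: "(\<lambda>\<omega>. edge_wt \<omega> a b) \<in> borel_measurable P"
  unfolding edge_wt_def by (cases "fst a = fst b") (simp_all add: meas_comp)

lemma meas_path: "(\<lambda>\<omega>. path_time \<omega> p) \<in> borel_measurable P"
  unfolding path_time_def by (intro borel_measurable_sum meas_edge)

lemma meas_T[measurable]: "(\<lambda>\<omega>. T \<omega> u w) \<in> borel_measurable P"
  unfolding T_def' by (intro borel_measurable_cINF_real countableI_type meas_path)

lemma meas_trv: "(\<lambda>\<omega> a. \<omega> (trv d1 d2 s a)) \<in> measurable P P"
  by (rule measurable_PiM_single') (auto simp: spaceP spaceG intro: measurable_component_singleton)

lemma inj_trv: "s = 1 \<or> s = -1 \<Longrightarrow> inj (trv d1 d2 s)"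
  by (auto simp: inj_def trv_def)

lemma distr_trv: "s = 1 \<or> s = -1 \<Longrightarrow> distr P P (\<lambda>\<omega> a. \<omega> (trv d1 d2 s a)) = P"
  using distr_PiM_reindex[of UNIV "\<lambda>_. G" "trv d1 d2 s" UNIV] G inj_trv by (simp add: restrict_UNIV)

lemma T_distr:
  assumes s: "s = 1 \<or> s = -1"
  shows "measure P {\<omega>\<in>space P. T \<omega> (trv d1 d2 s u) (trv d1 d2 s w) / c > t}
       = measure P {\<omega>\<in>space P. T \<omega> u w / c > t}"
proof -
  let ?M = "\<lambda>\<omega> a. \<omega> (trv d1 d2 s a)"
  have "{\<omega>\<in>space P. T \<omega> (trv d1 d2 s u) (trv d1 d2 s w) / c > t}
      = ?M -` {\<omega>\<in>space P. T \<omega> u w / c > t} \<inter> space P"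
    by (auto simp: spaceP T_trv[OF s])
  also have "measure P \<dots> = measure (distr P P ?M) {\<omega>\<in>space P. T \<omega> u w / c > t}"
    by (rule measure_distr[symmetric, OF meas_trv]) measurable
  finally show ?thesis by (simp add: distr_trv[OF s])
qed

lemma AE_ex: assumes "AE \<omega> in P. Q \<omega>" shows "\<exists>\<omega>. Q \<omega>"
proof (rule ccontr)
  assume "\<nexists>\<omega>. Q \<omega>"
  with assms have "AE \<omega> in P. False" by simp
  then show False using prob_space.AE_False[OF P] by simp
qed

end


lemma ceil_bound:
  fixes n k1 k2 :: nat and l v w u :: real and s :: int
  assumes k: "k1 + k2 = n" "real k1 \<le> l * n" "real k1 > l * n - 1"
    and vw: "v \<ge> 0" "w \<ge> 0" and s: "s = 1 \<or> s = -1" and u: "u = l * v + (1 - l) * s * w"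
  shows "\<bar>real_of_int (\<lceil>u * n\<rceil> - (\<lceil>v * k1\<rceil> + s * \<lceil>w * k2\<rceil>))\<bar> \<le> v + w + 3"
proof -
  have c1: "u * n \<le> \<lceil>u * n\<rceil>" "\<lceil>u * n\<rceil> < u * n + 1" by linarith+
  have c2: "v * k1 \<le> \<lceil>v * k1\<rceil>" "\<lceil>v * k1\<rceil> < v * k1 + 1" by linarith+
  have c3: "w * k2 \<le> \<lceil>w * k2\<rceil>" "\<lceil>w * k2\<rceil> < w * k2 + 1" by linarith+
  have k2: "real k2 = n - real k1" using k(1) by auto
  have p1: "v * k1 \<le> v * (l * n)" using vw k by (intro mult_left_mono) auto
  have p2: "v * k1 \<ge> v * (l * n) - v" using vw k mult_left_mono[of "l * n - 1" "real k1" v] by (simp add: algebra_simps)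
  have p3: "w * k2 \<ge> w * (n - l * n)" using vw k k2 by (intro mult_left_mono) auto
  have p4: "w * k2 \<le> w * (n - l * n) + w" using vw k k2 mult_left_mono[of "real k2" "n - l * n + 1" w] by (simp add: algebra_simps)
  have un: "u * n = v * (l * n) + s * (w * (n - l * n))" by (simp add: u algebra_simps)
  show ?thesis
  proof (cases "s = 1")
    case True
    then show ?thesis using c1 c2 c3 p1 p2 p3 p4 un vw by (simp add: abs_le_iff) linarith
  next
    case False
    then have "s = -1" using s by auto
    then show ?thesis using c1 c2 c3 p1 p2 p3 p4 un vw by (simp add: abs_le_iff) linarith
  qed
qed

lemma sublim:
  fixes h :: "nat \<Rightarrow> real"
  assumes h: "(\<lambda>n. h n / real n) \<longlonglongrightarrow> L" and m: "filterlim m at_top sequentially"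
    and r: "(\<lambda>n. real (m n) / real n) \<longlonglongrightarrow> r"
  shows "(\<lambda>n. h (m n) / real n) \<longlonglongrightarrow> L * r"
proof -
  have "(\<lambda>n. h (m n) / real (m n)) \<longlonglongrightarrow> L" using filterlim_compose[OF h m] by simp
  then have 1: "(\<lambda>n. h (m n) / real (m n) * (real (m n) / real n)) \<longlonglongrightarrow> L * r"
    by (intro tendsto_mult r)
  have "\<forall>\<^sub>F n in sequentially. 1 \<le> m n" using m by (simp add: filterlim_at_top)
  then have "\<forall>\<^sub>F n in sequentially. h (m n) / real (m n) * (real (m n) / real n) = h (m n) / real n"
    by eventually_elim simp
  with 1 show ?thesis by (rule Lim_transform_eventually)
qed

context fpp begin

lemma lim': "v \<ge> 0 \<Longrightarrow> AE \<omega> in P. (\<lambda>n. T \<omega> (0,0) (int n, \<lceil>v * real n\<rceil>) / real n) \<longlonglongrightarrow> \<Lambda> v"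
  using lim by (simp add: T_def)

lemma lip0:
  assumes v: "v \<ge> 0" and w: "w \<ge> 0"
  shows "\<Lambda> v \<le> \<Lambda> w + \<bar>v - w\<bar>"
proof -
  have "AE \<omega> in P. (\<forall>e. \<omega> e \<ge> 0) \<and> (\<lambda>n. T \<omega> (0,0) (int n, \<lceil>v * real n\<rceil>) / real n) \<longlonglongrightarrow> \<Lambda> v
     \<and> (\<lambda>n. T \<omega> (0,0) (int n, \<lceil>w * real n\<rceil>) / real n) \<longlonglongrightarrow> \<Lambda> w"
    using AE_nonneg lim'[OF v] lim'[OF w] by eventually_elim auto
  then obtain \<omega> where nn: "\<forall>e. \<omega> e \<ge> 0"
    and l1: "(\<lambda>n. T \<omega> (0,0) (int n, \<lceil>v * real n\<rceil>) / real n) \<longlonglongrightarrow> \<Lambda> v"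
    and l2: "(\<lambda>n. T \<omega> (0,0) (int n, \<lceil>w * real n\<rceil>) / real n) \<longlonglongrightarrow> \<Lambda> w"
    using AE_ex by blast
  have l3: "(\<lambda>n. T \<omega> (0,0) (int n, \<lceil>w * real n\<rceil>) / real n + (\<bar>v - w\<bar> + 1 / real n)) \<longlonglongrightarrow> \<Lambda> w + (\<bar>v - w\<bar> + 0)"
    by (intro tendsto_add l2 tendsto_const lim_inverse_n')
  have "\<forall>\<^sub>F n in sequentially. T \<omega> (0,0) (int n, \<lceil>v * real n\<rceil>) / real n \<le>
      T \<omega> (0,0) (int n, \<lceil>w * real n\<rceil>) / real n + (\<bar>v - w\<bar> + 1 / real n)"
    using eventually_gt_at_top[of 0]
  proof eventually_elim
    case (elim n)
    have a: "\<bar>real_of_int (\<lceil>v * real n\<rceil> - \<lceil>w * real n\<rceil>)\<bar> \<le> \<bar>v - w\<bar> * n + 1"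
    proof -
      have "\<bar>v * n - w * n\<bar> = \<bar>v - w\<bar> * n" by (simp add: abs_mult left_diff_distrib[symmetric])
      moreover have "v * n \<le> \<lceil>v * n\<rceil>" "\<lceil>v * n\<rceil> < v * n + 1" "w * n \<le> \<lceil>w * n\<rceil>" "\<lceil>w * n\<rceil> < w * n + 1"
        by linarith+
      ultimately show ?thesis by (simp add: abs_le_iff) linarith
    qed
    have "T \<omega> (0,0) (int n, \<lceil>v * real n\<rceil>) \<le> T \<omega> (0,0) (int n, \<lceil>w * real n\<rceil>) + (\<bar>v - w\<bar> * n + 1)"
      using T_vert[OF nn, of "(0,0)" "int n" "\<lceil>v * real n\<rceil>" "\<lceil>w * real n\<rceil>"] a by linarith
    then have "T \<omega> (0,0) (int n, \<lceil>v * real n\<rceil>) / n \<le> (T \<omega> (0,0) (int n, \<lceil>w * real n\<rceil>) + (\<bar>v - w\<bar> * n + 1)) / n"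
      by (intro divide_right_mono) auto
    also have "\<dots> = T \<omega> (0,0) (int n, \<lceil>w * real n\<rceil>) / real n + (\<bar>v - w\<bar> + 1 / real n)"
      using elim by (simp add: field_simps)
    finally show ?case .
  qed
  from tendsto_le[OF trivial_limit_sequentially l3 l1 this] show ?thesis by simp
qed

end


context fpp begin

lemma conv:
  fixes s :: int and l v w u :: real
  assumes v: "v \<ge> 0" and w: "w \<ge> 0" and s: "s = 1 \<or> s = -1" and l: "0 < l" "l < 1"
    and u: "u = l * v + (1 - l) * s * w" and u0: "u \<ge> 0"
  shows "\<Lambda> u \<le> l * \<Lambda> v + (1 - l) * \<Lambda> w"
proof -
  define n1 where "n1 n = nat \<lfloor>l * real n\<rfloor>" for n :: nat
  define n2 where "n2 n = n - n1 n" for n :: nat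
  define a where "a n = \<lceil>v * real (n1 n)\<rceil>" for n :: nat
  define C where "C = v + w + 3"
  define X where "X n \<omega> = T \<omega> (0,0) (int (n1 n), a n) / real n" for n \<omega>
  define Z where "Z n \<omega> = T \<omega> (0,0) (int (n2 n), \<lceil>w * real (n2 n)\<rceil>) / real n" for n \<omega>
  define Y where "Y n \<omega> = T \<omega> (trv (int (n1 n)) (a n) s (0,0))
      (trv (int (n1 n)) (a n) s (int (n2 n), \<lceil>w * real (n2 n)\<rceil>)) / real n" for n \<omega>
  define W where "W n \<omega> = T \<omega> (0,0) (int n, \<lceil>u * real n\<rceil>) / real n - C / real n" for n \<omega>
  have n1a: "real (n1 n) \<le> l * n" for n using l by (simp add: n1_def)
  have n1b: "real (n1 n) > l * n - 1" for n using l by (simp add: n1_def)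
  have n1n: "n1 n \<le> n" for n
  proof -
    have "l * real n \<le> 1 * real n" using l by (intro mult_right_mono) auto
    then have "real (n1 n) \<le> real n" using n1a[of n] by simp
    then show ?thesis by simp
  qed
  have n12: "n1 n + n2 n = n" for n using n1n[of n] by (simp add: n2_def)
  have rn2: "real (n2 n) = real n - real (n1 n)" for n using n12[of n] by (metis add_diff_cancel_left' of_nat_add)
  have "filterlim n1 at_top sequentially"
    unfolding filterlim_at_top eventually_sequentially
  proof
    fix Z :: nat
    show "\<exists>N. \<forall>n\<ge>N. Z \<le> n1 n"
    proof (intro exI allI impI)
      fix n assume "nat \<lceil>(Z + 1) / l\<rceil> \<le> n"
      then have "(Z + 1) / l \<le> n" by linarith
      then have "Z + 1 \<le> l * n" using l by (simp add: field_simps)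
      then show "Z \<le> n1 n" using n1b[of n] by linarith
    qed
  qed
  then have fl1: "filterlim n1 at_top sequentially" .
  have "filterlim n2 at_top sequentially"
    unfolding filterlim_at_top eventually_sequentially
  proof
    fix Z :: nat
    show "\<exists>N. \<forall>n\<ge>N. Z \<le> n2 n"
    proof (intro exI allI impI)
      fix n assume "nat \<lceil>Z / (1 - l)\<rceil> \<le> n"
      then have "Z / (1 - l) \<le> n" by linarith
      then have "Z \<le> (1 - l) * n" using l by (simp add: field_simps)
      then show "Z \<le> n2 n" using n1a[of n] rn2[of n] by (simp add: algebra_simps)
    qed
  qed
  then have fl2: "filterlim n2 at_top sequentially" .
  have inv: "(\<lambda>n. 1 / real n) \<longlonglongrightarrow> 0" by (rule lim_inverse_n')
  have r1: "(\<lambda>n. real (n1 n) / real n) \<longlonglongrightarrow> l"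
  proof (rule tendsto_sandwich[of "\<lambda>n. l - 1 / real n" _ _ "\<lambda>n. l"])
    show "\<forall>\<^sub>F n in sequentially. l - 1 / real n \<le> real (n1 n) / real n"
      using eventually_gt_at_top[of 0] proof eventually_elim
      case (elim n)
      have "l - 1 / real n = (l * n - 1) / n" using elim by (simp add: field_simps)
      also have "\<dots> \<le> real (n1 n) / n" using n1b[of n] by (intro divide_right_mono) auto
      finally show ?case .
    qed
    show "\<forall>\<^sub>F n in sequentially. real (n1 n) / real n \<le> l"
      using eventually_gt_at_top[of 0] proof eventually_elim
      case (elim n) then show ?case using n1a[of n] by (simp add: field_simps)
    qed
    show "(\<lambda>n. l - 1 / real n) \<longlonglongrightarrow> l" using tendsto_diff[OF tendsto_const inv, of l] by simp
  qed simp
  have r2: "(\<lambda>n. real (n2 n) / real n) \<longlonglongrightarrow> 1 - l"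
  proof -
    have "(\<lambda>n. 1 - real (n1 n) / real n) \<longlonglongrightarrow> 1 - l" by (intro tendsto_diff tendsto_const r1)
    moreover have "\<forall>\<^sub>F n in sequentially. 1 - real (n1 n) / real n = real (n2 n) / real n"
      using eventually_gt_at_top[of 0] proof eventually_elim
      case (elim n) then show ?case using rn2[of n] by (simp add: field_simps)
    qed
    ultimately show ?thesis by (rule Lim_transform_eventually)
  qed
  have "\<Lambda> u \<le> l * \<Lambda> v + (1 - l) * \<Lambda> w"
  proof (rule prob_key[OF P, of X Y Z W])
    show "\<And>n. X n \<in> borel_measurable P" "\<And>n. Y n \<in> borel_measurable P"
      "\<And>n. Z n \<in> borel_measurable P" "\<And>n. W n \<in> borel_measurable P"
      unfolding X_def Y_def Z_def W_def by measurable
    show "measure P {\<omega>\<in>space P. Y n \<omega> > t} = measure P {\<omega>\<in>space P. Z n \<omega> > t}" for n t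
      unfolding Y_def Z_def by (rule T_distr[OF s])
    show "AE \<omega> in P. \<forall>n. W n \<omega> \<le> X n \<omega> + Y n \<omega>"
      using AE_nonneg
    proof eventually_elim
      case (elim \<omega>)
      show ?case
      proof
        fix n
        have t1: "trv (int (n1 n)) (a n) s (0,0) = (int (n1 n), a n)" by (simp add: trv_def)
        have t2: "trv (int (n1 n)) (a n) s (int (n2 n), \<lceil>w * real (n2 n)\<rceil>) = (int n, s * \<lceil>w * real (n2 n)\<rceil> + a n)"
          using n12[of n] by (simp add: trv_def)
        have cb: "\<bar>real_of_int (\<lceil>u * n\<rceil> - (s * \<lceil>w * real (n2 n)\<rceil> + a n))\<bar> \<le> C"
          using ceil_bound[OF n12[of n] n1a[of n] n1b[of n] v w s u] by (simp add: C_def a_def add.commute)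
        have "T \<omega> (0,0) (int n, \<lceil>u * real n\<rceil>) \<le> T \<omega> (0,0) (int n, s * \<lceil>w * real (n2 n)\<rceil> + a n) + C"
          using T_vert[OF elim, of "(0,0)" "int n" "\<lceil>u * real n\<rceil>" "s * \<lceil>w * real (n2 n)\<rceil> + a n"] cb by linarith
        also have "\<dots> \<le> T \<omega> (0,0) (int (n1 n), a n) + T \<omega> (int (n1 n), a n) (int n, s * \<lceil>w * real (n2 n)\<rceil> + a n) + C"
          using T_triangle[OF elim] by simp
        finally have "T \<omega> (0,0) (int n, \<lceil>u * real n\<rceil>) - C \<le> T \<omega> (0,0) (int (n1 n), a n) + T \<omega> (int (n1 n), a n) (int n, s * \<lceil>w * real (n2 n)\<rceil> + a n)"
          by simp
        then have "(T \<omega> (0,0) (int n, \<lceil>u * real n\<rceil>) - C) / n \<le> (T \<omega> (0,0) (int (n1 n), a n) + T \<omega> (int (n1 n), a n) (int n, s * \<lceil>w * real (n2 n)\<rceil> + a n)) / n"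
          by (intro divide_right_mono) auto
        then show "W n \<omega> \<le> X n \<omega> + Y n \<omega>"
          unfolding W_def X_def Y_def t1 t2 by (simp add: diff_divide_distrib add_divide_distrib)
      qed
    qed
    show "AE \<omega> in P. (\<lambda>n. X n \<omega>) \<longlonglongrightarrow> l * \<Lambda> v"
      using lim'[OF v]
    proof eventually_elim
      case (elim \<omega>)
      from sublim[OF elim fl1 r1] show ?case by (simp add: X_def a_def mult.commute)
    qed
    show "AE \<omega> in P. (\<lambda>n. Z n \<omega>) \<longlonglongrightarrow> (1 - l) * \<Lambda> w"
      using lim'[OF w]
    proof eventually_elim
      case (elim \<omega>)
      from sublim[OF elim fl2 r2] show ?case by (simp add: Z_def mult.commute)
    qed
    show "AE \<omega> in P. (\<lambda>n. W n \<omega>) \<longlonglongrightarrow> \<Lambda> u"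
      using lim'[OF u0]
    proof eventually_elim
      case (elim \<omega>)
      have "(\<lambda>n. T \<omega> (0,0) (int n, \<lceil>u * real n\<rceil>) / real n - C * (1 / real n)) \<longlonglongrightarrow> \<Lambda> u - C * 0"
        by (intro tendsto_diff elim tendsto_mult tendsto_const inv)
      then show ?case by (simp add: W_def)
    qed
  qed
  then show ?thesis .
qed

end


context fpp begin

lemma Lam_abs: "\<Lambda> x = \<Lambda> \<bar>x\<bar>"
  using sym[of x] by (cases "x \<ge> 0") auto

lemma lip: "\<bar>\<Lambda> x - \<Lambda> y\<bar> \<le> \<bar>x - y\<bar>"
proof -
  have "\<bar>\<Lambda> \<bar>x\<bar> - \<Lambda> \<bar>y\<bar>\<bar> \<le> \<bar>\<bar>x\<bar> - \<bar>y\<bar>\<bar>"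
    using lip0[of "\<bar>x\<bar>" "\<bar>y\<bar>"] lip0[of "\<bar>y\<bar>" "\<bar>x\<bar>"] by (auto simp: abs_le_iff abs_minus_commute)
  also have "\<dots> \<le> \<bar>x - y\<bar>" by (rule abs_triangle_ineq3)
  finally show ?thesis using Lam_abs[of x] Lam_abs[of y] by simp
qed

lemma base: "v \<ge> 0 \<Longrightarrow> \<Lambda> 0 \<le> \<Lambda> v"
  using conv[of v v "-1" "1/2" 0] by simp

lemma convp: "x \<ge> 0 \<Longrightarrow> y \<ge> 0 \<Longrightarrow> 0 < t \<Longrightarrow> t < 1 \<Longrightarrow>
   \<Lambda> ((1 - t) * x + t * y) \<le> (1 - t) * \<Lambda> x + t * \<Lambda> y"
  using conv[of x y 1 "1 - t" "(1 - t) * x + t * y"] by simp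

lemma monoL: assumes "0 \<le> x" "x \<le> y" shows "\<Lambda> x \<le> \<Lambda> y"
proof (cases "x = 0 \<or> x = y")
  case True then show ?thesis using base assms by auto
next
  case False
  then have xy: "0 < x" "x < y" using assms by auto
  define t where "t = x / y"
  have t: "0 < t" "t < 1" using xy by (auto simp: t_def field_simps)
  have "x = (1 - t) * 0 + t * y" using xy by (simp add: t_def)
  then have "\<Lambda> x \<le> (1 - t) * \<Lambda> 0 + t * \<Lambda> y" using convp[of 0 y t] t xy by simp
  also have "\<dots> \<le> (1 - t) * \<Lambda> y + t * \<Lambda> y" using base[of y] xy t by (intro add_right_mono mult_left_mono) auto
  finally show ?thesis by (simp add: algebra_simps)
qed

lemma convL: "convex_on UNIV \<Lambda>"
proof (rule convex_onI)
  fix t x y :: real assume t: "0 < t" "t < 1"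
  have "\<Lambda> ((1 - t) *\<^sub>R x + t *\<^sub>R y) = \<Lambda> \<bar>(1 - t) * x + t * y\<bar>" using Lam_abs by simp
  also have "\<dots> \<le> \<Lambda> ((1 - t) * \<bar>x\<bar> + t * \<bar>y\<bar>)"
  proof (rule monoL)
    show "\<bar>(1 - t) * x + t * y\<bar> \<le> (1 - t) * \<bar>x\<bar> + t * \<bar>y\<bar>"
      using abs_triangle_ineq[of "(1 - t) * x" "t * y"] t by (simp add: abs_mult)
  qed simp
  also have "\<dots> \<le> (1 - t) * \<Lambda> \<bar>x\<bar> + t * \<Lambda> \<bar>y\<bar>" using convp t by simp
  finally show "\<Lambda> ((1 - t) *\<^sub>R x + t *\<^sub>R y) \<le> (1 - t) * \<Lambda> x + t * \<Lambda> y"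
    using Lam_abs[of x] Lam_abs[of y] by simp
qed simp

lemma right_ok: "\<bar>right_deriv \<Lambda> v\<bar> \<le> 1 \<and> (v > 0 \<longrightarrow> right_deriv \<Lambda> v \<ge> 0)"
proof -
  define q where "q w = (\<Lambda> w - \<Lambda> v) / (w - v)" for w
  have qb: "\<bar>q w\<bar> \<le> 1" if "w > v" for w
    using lip[of w v] that by (simp add: q_def abs_divide divide_le_eq)
  have "(q \<longlongrightarrow> Inf (q ` ({v<..} \<inter> UNIV))) (at v within ({v<..} \<inter> UNIV))"
  proof (rule Lim_right_bound[where K = "-1"])
    fix a b assume ab: "v < a" "a \<le> b"
    show "q a \<le> q b"
    proof (cases "a = b")
      case False
      then have "a < b" using ab by simp
      from convex_on_slope_le(1)[OF convL _ _ ab(1) this] show ?thesis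
        using ab by (simp add: q_def) (metis minus_diff_eq minus_divide_divide)
    qed simp
  next
    fix a assume "v < a" then show "-1 \<le> q a" using qb[of a] by simp
  qed
  then have lim: "(q \<longlongrightarrow> Inf (q ` {v<..})) (at_right v)" by simp
  have rd: "right_deriv \<Lambda> v = Inf (q ` {v<..})"
    unfolding right_deriv_def q_def[symmetric] by (rule tendsto_Lim[OF trivial_limit_at_right_real lim])
  have ev: "\<forall>\<^sub>F w in at_right v. w \<in> {v<..<v+1}" by (rule eventually_at_right_real) simp
  have "\<forall>\<^sub>F w in at_right v. -1 \<le> q w" using ev by (rule eventually_mono) (use qb in force)
  from tendsto_lowerbound[OF lim this trivial_limit_at_right_real] have 1: "-1 \<le> right_deriv \<Lambda> v" by (simp add: rd)
  have "\<forall>\<^sub>F w in at_right v. q w \<le> 1" using ev by (rule eventually_mono) (use qb in force)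
  from tendsto_upperbound[OF lim this trivial_limit_at_right_real] have 2: "right_deriv \<Lambda> v \<le> 1" by (simp add: rd)
  have 3: "right_deriv \<Lambda> v \<ge> 0" if "v > 0"
  proof -
    have "\<forall>\<^sub>F w in at_right v. 0 \<le> q w" using ev
    proof (rule eventually_mono)
      fix w assume "w \<in> {v<..<v+1}"
      then show "0 \<le> q w" using monoL[of v w] that by (simp add: q_def)
    qed
    from tendsto_lowerbound[OF lim this trivial_limit_at_right_real] show ?thesis by (simp add: rd)
  qed
  show ?thesis using 1 2 3 by auto
qed

lemma left_ok: "\<bar>left_deriv \<Lambda> v\<bar> \<le> 1 \<and> (v > 0 \<longrightarrow> left_deriv \<Lambda> v \<ge> 0)"
proof -
  define q where "q w = (\<Lambda> v - \<Lambda> w) / (v - w)" for w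
  have qb: "\<bar>q w\<bar> \<le> 1" if "w < v" for w
    using lip[of v w] that by (simp add: q_def abs_divide divide_le_eq)
  have "(q \<longlongrightarrow> Sup (q ` ({..<v} \<inter> UNIV))) (at v within ({..<v} \<inter> UNIV))"
  proof (rule Lim_left_bound[where K = "1"])
    fix a b assume ab: "b < v" "a \<le> b"
    show "q a \<le> q b"
    proof (cases "a = b")
      case False
      then have "a < b" using ab by simp
      from convex_on_slope_le(2)[OF convL _ _ this ab(1)] show ?thesis
        using ab by (simp add: q_def) (metis minus_diff_eq minus_divide_divide)
    qed simp
  next
    fix a assume "a < v" then show "q a \<le> 1" using qb[of a] by simp
  qed
  then have lim: "(q \<longlongrightarrow> Sup (q ` {..<v})) (at_left v)" by simp
  have rd: "left_deriv \<Lambda> v = Sup (q ` {..<v})"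
    unfolding left_deriv_def q_def[symmetric] by (rule tendsto_Lim[OF trivial_limit_at_left_real lim])
  have ev: "\<forall>\<^sub>F w in at_left v. w \<in> {v-1<..<v}" by (rule eventually_at_left_real) simp
  have "\<forall>\<^sub>F w in at_left v. -1 \<le> q w" using ev by (rule eventually_mono) (use qb in force)
  from tendsto_lowerbound[OF lim this trivial_limit_at_left_real] have 1: "-1 \<le> left_deriv \<Lambda> v" by (simp add: rd)
  have "\<forall>\<^sub>F w in at_left v. q w \<le> 1" using ev by (rule eventually_mono) (use qb in force)
  from tendsto_upperbound[OF lim this trivial_limit_at_left_real] have 2: "left_deriv \<Lambda> v \<le> 1" by (simp add: rd)
  have 3: "left_deriv \<Lambda> v \<ge> 0" if "v > 0"
  proof -
    have ev0: "\<forall>\<^sub>F w in at_left v. w \<in> {0<..<v}" by (rule eventually_at_left_real) (use that in simp)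
    have "\<forall>\<^sub>F w in at_left v. 0 \<le> q w" using ev0
    proof (rule eventually_mono)
      fix w assume "w \<in> {0<..<v}"
      then show "0 \<le> q w" using monoL[of w v] by (simp add: q_def)
    qed
    from tendsto_lowerbound[OF lim this trivial_limit_at_left_real] show ?thesis by (simp add: rd)
  qed
  show ?thesis using 1 2 3 by auto
qed

end

theorem proposition2p6:
  fixes G :: "real measure" and \<Lambda> :: "real \<Rightarrow> real"
  assumes "prob_space G"
    and "sets G = sets borel"
    and "measure G {0..} = 1"
    and "\<And>v. v \<ge> 0 \<Longrightarrow>
           AE \<omega> in PiM UNIV (\<lambda>_::int \<times> int. G).
             (\<lambda>n. passage_time \<omega> (0, 0) (int n, \<lceil>v * real n\<rceil>) / real n) \<longlonglongrightarrow> \<Lambda> v"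
    and "\<And>v. \<Lambda> (- v) = \<Lambda> v"
  shows "\<forall>v. \<bar>right_deriv \<Lambda> v\<bar> \<le> 1 \<and> \<bar>left_deriv \<Lambda> v\<bar> \<le> 1 \<and>
             (v > 0 \<longrightarrow> right_deriv \<Lambda> v \<ge> 0 \<and> left_deriv \<Lambda> v \<ge> 0)"
proof -
  have "fpp G \<Lambda>" unfolding fpp_def using assms by blast
  then interpret fpp G \<Lambda> .
  show ?thesis using right_ok left_ok by blast
qed

end
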